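(* Let $A\in{\operatorname{\mathsf{TPD}}}_n(\mathbb{S}_{\max}^\vee)$, with $\gamma_i=a_{ii}$ ordered so that $\gamma_1\succeq\cdots\succeq\gamma_n$, and assume $\gamma=\gamma_1$ is simple, i.e. $\gamma_1\succ\gamma_2$. Let $v^{(1)}=(\gamma I\ominus A)^{\mathrm{adj}}_{:,1}$. If $v^{(1)}$ does not belong to $(\mathbb{S}_{\max}^\vee)^n$, then $A$ has no strong $\mathbb{S}_{\max}$-eigenvector associated to the eigenvalue $\gamma$.
   Context: $\mathbb{S}_{\max}$ is the symmetrized tropical semiring over a divisible totally ordered abelian group, with zero $\mathbf{0}$, unit $\mathbf{1}$, minus $\ominus$; $\mathbb{S}_{\max}^\vee$ is the set of signed elements (positive, negative or $\mathbf{0}$). $a\preceq b$ iff $b=a\oplus b$; $a\succ b$ iff $b\preceq a$ and $a\ne b$. $A\in{\operatorname{\mathsf{TPD}}}_n(\mathbb{S}_{\max}^\vee)$: $A$ symmetric with signed entries, $\mathbf{0}<a_{ii}$ and $a_{ij}^2<a_{ii}a_{jj}$ for $i\ne j$ (where $a<b$ iff $b\ominus a$ is positive). Its $\mathbb{S}_{\max}$-eigenvalues are its diagonal entries. $(M^{\mathrm{adj}})_{ij}=(\ominus\mathbf{1})^{i+j}\det M[\hat j,\hat i]$ (signed determinant), $M_{:,1}$ the first column. A strong $\mathbb{S}_{\max}$-eigenvector for $\gamma$ is $v\in(\mathbb{S}_{\max}^\vee)^n\setminus\{\mathbf{0}\}$ with $Av=\gamma v$. *)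

theory Defs
  imports "HOL-Combinatorics.Permutations"
begin

text \<open>The group is written additively ('a :: linordered_ab_group_add); tropical product is
group addition, tropical sum is max.  Elements: the zero (= -infinity), positive elements a,
negative elements (minus a), balanced elements a-dot.\<close>

datatype 'a smax = SZero | SPos 'a | SNeg 'a | SBal 'a

definition divisible_group :: "'a::linordered_ab_group_add itself \<Rightarrow> bool" where
  "divisible_group _ = (\<forall>(x::'a) (n::nat). n > 0 \<longrightarrow> (\<exists>y. (\<Sum>_\<in>{1..n}. y) = x))"

fun smag :: "'a::linordered_ab_group_add smax \<Rightarrow> 'a" where
  "smag SZero = 0"
| "smag (SPos a) = a"
| "smag (SNeg a) = a"
| "smag (SBal a) = a"

definition splus :: "'a::linordered_ab_group_add smax \<Rightarrow> 'a smax \<Rightarrow> 'a smax" where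
  "splus x y =
     (if x = SZero then y else if y = SZero then x
      else if smag y < smag x then x else if smag x < smag y then y
      else if x = y then x else SBal (smag x))"

fun stimes :: "'a::linordered_ab_group_add smax \<Rightarrow> 'a smax \<Rightarrow> 'a smax" where
  "stimes SZero y = SZero"
| "stimes x SZero = SZero"
| "stimes (SPos a) (SPos b) = SPos (a + b)"
| "stimes (SPos a) (SNeg b) = SNeg (a + b)"
| "stimes (SNeg a) (SPos b) = SNeg (a + b)"
| "stimes (SNeg a) (SNeg b) = SPos (a + b)"
| "stimes x y = SBal (smag x + smag y)"

fun sminus :: "'a smax \<Rightarrow> 'a smax" where
  "sminus SZero = SZero"
| "sminus (SPos a) = SNeg a"
| "sminus (SNeg a) = SPos a"
| "sminus (SBal a) = SBal a"

instantiation smax :: (linordered_ab_group_add) comm_monoid_add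
begin
definition zero_smax_def: "0 = SZero"
definition plus_smax_def: "x + y = splus x y"
instance
proof
  fix a b c :: "'a smax"
  show "a + b + c = a + (b + c)"
    unfolding plus_smax_def splus_def
    by (cases a; cases b; cases c) auto
  show "a + b = b + a"
    unfolding plus_smax_def splus_def
    by (cases a; cases b) auto
  show "0 + a = a"
    unfolding plus_smax_def splus_def zero_smax_def by simp
qed
end

instantiation smax :: (linordered_ab_group_add) comm_monoid_mult
begin
definition one_smax_def: "1 = SPos 0"
definition times_smax_def: "x * y = stimes x y"
instance
proof
  fix a b c :: "'a smax"
  show "a * b * c = a * (b * c)"
    unfolding times_smax_def
    by (cases a; cases b; cases c) (auto simp: add.assoc)
  show "a * b = b * a"
    unfolding times_smax_def
    by (cases a; cases b) (auto simp: add.commute)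
  show "1 * a = a"
    unfolding times_smax_def one_smax_def by (cases a) auto
qed
end

instantiation smax :: (type) uminus
begin
definition uminus_smax_def: "- x = sminus x"
instance ..
end

definition sdiff :: "'a::linordered_ab_group_add smax \<Rightarrow> 'a smax \<Rightarrow> 'a smax" (infixl "\<ominus>" 65) where
  "a \<ominus> b = a + (- b)"

definition signed :: "'a smax \<Rightarrow> bool" where
  "signed x = (\<forall>a. x \<noteq> SBal a)"

definition spositive :: "'a smax \<Rightarrow> bool" where
  "spositive x = (\<exists>a. x = SPos a)"

definition sle :: "'a::linordered_ab_group_add smax \<Rightarrow> 'a smax \<Rightarrow> bool" where
  "sle a b = (b = a + b)"

definition sgt :: "'a::linordered_ab_group_add smax \<Rightarrow> 'a smax \<Rightarrow> bool" where
  "sgt a b = (sle b a \<and> a \<noteq> b)"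

definition slt :: "'a::linordered_ab_group_add smax \<Rightarrow> 'a smax \<Rightarrow> bool" where
  "slt a b = spositive (b \<ominus> a)"

type_synonym 'a smat = "nat \<Rightarrow> nat \<Rightarrow> 'a smax"

definition psign :: "(nat \<Rightarrow> nat) \<Rightarrow> 'a::linordered_ab_group_add smax" where
  "psign p = (if evenperm p then 1 else - 1)"

definition sdet :: "nat \<Rightarrow> 'a::linordered_ab_group_add smat \<Rightarrow> 'a smax" where
  "sdet n M = (\<Sum>p | p permutes {..<n}. psign p * (\<Prod>i<n. M i (p i)))"

definition skip :: "nat \<Rightarrow> nat \<Rightarrow> nat" where
  "skip k i = (if i < k then i else Suc i)"

definition sminor :: "'a smat \<Rightarrow> nat \<Rightarrow> nat \<Rightarrow> 'a smat" where
  "sminor M j i = (\<lambda>r c. M (skip j r) (skip i c))"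

definition sadj :: "nat \<Rightarrow> 'a::linordered_ab_group_add smat \<Rightarrow> 'a smat" where
  "sadj n M = (\<lambda>i j. (- 1) ^ (i + j) * sdet (n - 1) (sminor M j i))"

definition sident :: "'a::linordered_ab_group_add smat" where
  "sident = (\<lambda>i j. if i = j then 1 else 0)"

definition TPD :: "nat \<Rightarrow> 'a::linordered_ab_group_add smat \<Rightarrow> bool" where
  "TPD n A = ((\<forall>i<n. \<forall>j<n. A i j = A j i \<and> signed (A i j))
     \<and> (\<forall>i<n. slt 0 (A i i))
     \<and> (\<forall>i<n. \<forall>j<n. i \<noteq> j \<longrightarrow> slt ((A i j)^2) (A i i * A j j)))"

definition strong_eigenvector :: "nat \<Rightarrow> 'a::linordered_ab_group_add smat \<Rightarrow> 'a smax \<Rightarrow> (nat \<Rightarrow> 'a smax) \<Rightarrow> bool" where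
  "strong_eigenvector n A \<gamma> v =
     ((\<forall>i<n. signed (v i)) \<and> (\<exists>i<n. v i \<noteq> 0)
      \<and> (\<forall>i<n. (\<Sum>j<n. A i j * v j) = \<gamma> * v i))"

end

theory Submission
  imports Defs
begin

fun sg :: "'a smax \<Rightarrow> int" where
  "sg SZero = 0" | "sg (SPos a) = 1" | "sg (SNeg a) = -1" | "sg (SBal a) = 0"

lemma sz: "(0::'a::linordered_ab_group_add smax) = SZero" by (simp add: zero_smax_def)
lemma so: "(1::'a::linordered_ab_group_add smax) = SPos 0" by (simp add: one_smax_def)

lemma sg_mult: "sg ((x::'a::linordered_ab_group_add smax) * y) = sg x * sg y"
  by (cases x; cases y) (auto simp: times_smax_def)

lemma mult_eq0: "((x::'a::linordered_ab_group_add smax) * y = 0) = (x = 0 \<or> y = 0)"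
  by (cases x; cases y) (auto simp: times_smax_def sz)

lemma smag_mult: "(x::'a::linordered_ab_group_add smax) \<noteq> 0 \<Longrightarrow> y \<noteq> 0 \<Longrightarrow> smag (x * y) = smag x + smag y"
  by (cases x; cases y) (auto simp: times_smax_def sz)

lemma signed_mult: "signed (x::'a::linordered_ab_group_add smax) \<Longrightarrow> signed y \<Longrightarrow> signed (x * y)"
  by (cases x; cases y) (auto simp: times_smax_def signed_def)

lemma sg_minus: "sg (- (x::'a smax)) = - sg x" by (cases x) (auto simp: uminus_smax_def)
lemma smag_minus: "smag (- (x::'a::linordered_ab_group_add smax)) = smag x" by (cases x) (auto simp: uminus_smax_def)
lemma signed_minus: "signed (- (x::'a smax)) = signed x" by (cases x) (auto simp: uminus_smax_def signed_def)
lemma minus_eq0: "(- (x::'a::linordered_ab_group_add smax) = 0) = (x = 0)" by (cases x) (auto simp: uminus_smax_def sz)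

lemma signed_eq: "signed (x::'a::linordered_ab_group_add smax) \<Longrightarrow> signed y \<Longrightarrow> sg x = sg y \<Longrightarrow> smag x = smag y \<Longrightarrow> x = y"
  by (cases x; cases y) (auto simp: signed_def)

lemma sg_zero_iff: "signed (x::'a::linordered_ab_group_add smax) \<Longrightarrow> (sg x = 0) = (x = 0)"
  by (cases x) (auto simp: signed_def sz)

lemma sg_sq: "signed (x::'a::linordered_ab_group_add smax) \<Longrightarrow> x \<noteq> 0 \<Longrightarrow> sg x * sg x = 1"
  by (cases x) (auto simp: signed_def sz)

lemma signed_zero[simp]: "signed (0::'a::linordered_ab_group_add smax)" by (simp add: sz signed_def)
lemma signed_one[simp]: "signed (1::'a::linordered_ab_group_add smax)" by (simp add: so signed_def)
lemma sg_one[simp]: "sg (1::'a::linordered_ab_group_add smax) = 1" by (simp add: so)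
lemma smag_one[simp]: "smag (1::'a::linordered_ab_group_add smax) = 0" by (simp add: so)
lemma one_ne0[simp]: "(1::'a::linordered_ab_group_add smax) \<noteq> 0" by (simp add: so sz)

lemma prod_props:
  fixes f :: "'b \<Rightarrow> 'a::linordered_ab_group_add smax"
  assumes "finite S" "\<forall>s\<in>S. signed (f s)"
  shows "signed (prod f S) \<and> sg (prod f S) = (\<Prod>s\<in>S. sg (f s)) \<and>
         (prod f S = 0 \<longleftrightarrow> (\<exists>s\<in>S. f s = 0)) \<and>
         ((\<forall>s\<in>S. f s \<noteq> 0) \<longrightarrow> smag (prod f S) = (\<Sum>s\<in>S. smag (f s)))"
  using assms
proof (induction S rule: finite_induct)
  case empty then show ?case by simp
next
  case (insert x F)
  then show ?case by (auto simp: signed_mult sg_mult mult_eq0 smag_mult)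
qed

lemma sum_idem: "(x::'a::linordered_ab_group_add smax) + x = x"
  by (simp add: plus_smax_def splus_def)

lemma sle_add: "sle a X \<Longrightarrow> sle b X \<Longrightarrow> sle (a + b) (X::'a::linordered_ab_group_add smax)"
  unfolding sle_def by (metis add.assoc)

lemma sle_sum_all: "finite S \<Longrightarrow> \<forall>s\<in>S. sle (f s) X \<Longrightarrow> sle (sum f S) (X::'a::linordered_ab_group_add smax)"
proof (induction S rule: finite_induct)
  case empty then show ?case by (simp add: sle_def)
next
  case (insert x F) then show ?case by (simp add: sle_add)
qed

lemma sum_eq_top:
  fixes f :: "'b \<Rightarrow> 'a::linordered_ab_group_add smax"
  assumes "finite S" "\<forall>s\<in>S. sle (f s) X" "s0 \<in> S" "f s0 = X"
  shows "sum f S = X"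
proof -
  have "sum f S = f s0 + sum f (S - {s0})" using assms by (simp add: sum.remove)
  moreover have "sle (sum f (S - {s0})) X" using assms by (intro sle_sum_all) auto
  ultimately show ?thesis using assms(4) unfolding sle_def by (simp add: add.commute)
qed

lemma sle_term: "sle (f c) (sum f S)" if "finite S" "c \<in> S" for f :: "'b \<Rightarrow> 'a::linordered_ab_group_add smax"
proof -
  have "sum f S = f c + sum f (S - {c})" using that by (simp add: sum.remove)
  then show ?thesis unfolding sle_def by (metis add.assoc sum_idem)
qed

lemma sle_char:
  fixes x X :: "'a::linordered_ab_group_add smax"
  assumes "signed x" "signed X" "X \<noteq> 0"
  shows "sle x X \<longleftrightarrow> (x = 0 \<or> smag x < smag X \<or> x = X)"
  using assms by (cases x; cases X) (auto simp: sle_def plus_smax_def splus_def signed_def sz)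

definition sbelow :: "'a::linordered_ab_group_add smax \<Rightarrow> 'a smax \<Rightarrow> bool" where
  "sbelow Y x = (x = 0 \<or> smag x < smag Y)"

lemma sbelow_add: "sbelow Y x \<Longrightarrow> sbelow Y y \<Longrightarrow> sbelow Y (x + y)"
  by (cases x; cases y) (auto simp: sbelow_def plus_smax_def splus_def sz)

lemma sbelow_sum: "finite S \<Longrightarrow> \<forall>s\<in>S. sbelow Y (f s) \<Longrightarrow> sbelow Y (sum f S)"
proof (induction S rule: finite_induct)
  case empty then show ?case by (simp add: sbelow_def)
next
  case (insert x F) then show ?case by (simp add: sbelow_add)
qed

lemma psign_props: "signed (psign p :: 'a::linordered_ab_group_add smax) \<and> sg (psign p :: 'a smax) = sign p \<and>
   smag (psign p :: 'a smax) = 0 \<and> (psign p :: 'a smax) \<noteq> 0"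
  by (auto simp: psign_def sign_def so uminus_smax_def signed_def sz)

lemma pow_props: "signed ((- 1) ^ k :: 'a::linordered_ab_group_add smax) \<and> sg ((- 1) ^ k :: 'a smax) = (-1)^k \<and>
   smag ((- 1) ^ k :: 'a smax) = 0 \<and> ((- 1) ^ k :: 'a smax) \<noteq> 0"
proof (induction k)
  case 0 then show ?case by simp
next
  case (Suc k)
  have m: "signed (- 1 :: 'a smax)" "sg (- 1 :: 'a smax) = -1" "smag (- 1 :: 'a smax) = 0" "(- 1 :: 'a smax) \<noteq> 0"
    by (auto simp: so uminus_smax_def signed_def sz)
  then show ?case using Suc by (auto simp: signed_mult sg_mult smag_mult mult_eq0)
qed

lemma fix_id:
  fixes p :: "'b \<Rightarrow> 'b" and y :: "'b \<Rightarrow> 'c::linorder"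
  assumes "finite S" "p permutes S" "\<forall>x. p x \<noteq> x \<and> x \<noteq> a \<longrightarrow> y x < y (p x)" "p a = a"
  shows "p = id"
proof (rule ccontr)
  assume ne: "p \<noteq> id"
  define M where "M = {x. p x \<noteq> x}"
  have fin: "finite M" using assms(1,2) unfolding M_def
    by (metis (mono_tags, lifting) finite_subset mem_Collect_eq permutes_not_in subsetI)
  have Mne: "M \<noteq> {}" using ne unfolding M_def by auto
  define m where "m = Max (y ` M)"
  have "m \<in> y ` M" unfolding m_def using fin Mne by (intro Max_in) auto
  then obtain x where x: "x \<in> M" "y x = m" by auto
  have ge: "\<forall>x'\<in>M. y x' \<le> m" unfolding m_def using fin by auto
  have inj: "inj p" using assms(2) permutes_inj by blast
  have xa: "x \<noteq> a" using x assms(4) unfolding M_def by auto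
  have "p x \<in> M" using x inj unfolding M_def by (auto dest: injD)
  then have "y (p x) \<le> m" using ge by auto
  moreover have "y x < y (p x)" using assms(3) x xa unfolding M_def by auto
  ultimately show False using x by auto
qed

lemma cyc_sign_aux:
  fixes y :: "'b \<Rightarrow> 'c::linorder"
  shows "\<forall>p. finite S \<longrightarrow> p permutes S \<longrightarrow> (\<forall>x. p x \<noteq> x \<and> x \<noteq> a \<longrightarrow> y x < y (p x)) \<longrightarrow> p a \<noteq> a
    \<longrightarrow> card {x. p x \<noteq> x} = N \<longrightarrow> sign p = (-1)^(N - 1)"
proof (induction N rule: less_induct)
  case (less N)
  show ?case
  proof (intro allI impI)
    fix p :: "'b \<Rightarrow> 'b"
    assume fS: "finite S" and pS: "p permutes S" and hy: "\<forall>x. p x \<noteq> x \<and> x \<noteq> a \<longrightarrow> y x < y (p x)"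
      and pa: "p a \<noteq> a" and cN: "card {x. p x \<noteq> x} = N"
    define b where "b = p a"
    have inj: "inj p" using pS permutes_inj by blast
    have aS: "a \<in> S" using pS pa permutes_not_in by metis
    have bS: "b \<in> S" using pS aS b_def permutes_in_image by metis
    have ab: "a \<noteq> b" using pa b_def by auto
    define q where "q = p \<circ> Transposition.transpose a b"
    have qS: "q permutes S" unfolding q_def by (intro permutes_compose permutes_swap_id aS bS pS)
    have qa: "q a = p b" and qb: "q b = b" and qo: "\<And>x. x \<noteq> a \<Longrightarrow> x \<noteq> b \<Longrightarrow> q x = p x"
      using ab by (auto simp: q_def b_def)
    have pq: "p = q \<circ> Transposition.transpose a b" unfolding q_def by (simp add: comp_assoc)
    have perm: "permutation q" using qS fS permutes_imp_permutation by blast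
    have sp: "sign p = - sign q"
      using pq perm by (simp add: sign_compose permutation_swap_id sign_swap_id ab)
    have hyq: "\<forall>x. q x \<noteq> x \<and> x \<noteq> a \<longrightarrow> y x < y (q x)"
      using hy qb qo by metis
    have finM: "finite {x. p x \<noteq> x}" using fS pS
      by (metis (mono_tags, lifting) finite_subset mem_Collect_eq permutes_not_in subsetI)
    show "sign p = (-1)^(N - 1)"
    proof (cases "p b = a")
      case True
      then have "q a = a" using qa by simp
      then have "q = id" using fix_id[OF fS qS hyq] by simp
      then have "p = Transposition.transpose a b" using pq by simp
      then have "{x. p x \<noteq> x} = {a, b}" using ab by (auto simp: transpose_def)
      then have "N = 2" using cN ab by simp
      then show ?thesis using sp \<open>q = id\<close> by simp
    next
      case False
      have qa': "q a \<noteq> a" using False qa by simp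
      have Mq: "{x. q x \<noteq> x} = {x. p x \<noteq> x} - {b}"
        apply (rule set_eqI)
        subgoal for x
        proof -
          consider "x = a" | "x = b" | "x \<noteq> a \<and> x \<noteq> b" by blast
          then show ?thesis
          proof cases
            case 1 then show ?thesis using qa' ab by (simp add: b_def pa)
          next
            case 2 then show ?thesis using qb by simp
          next
            case 3 then show ?thesis using qo[of x] by simp
          qed
        qed
        done
      have pbb: "p b \<noteq> b" using ab unfolding b_def by (simp add: inj_eq[OF inj])
      have bM: "b \<in> {x. p x \<noteq> x}" using pbb by simp
      have cq: "card {x. q x \<noteq> x} = N - 1" using Mq cN bM finM by simp
      have "a \<in> {x. q x \<noteq> x}" using qa' by simp
      moreover have "p b \<in> {x. q x \<noteq> x}"
      proof -
        have "p b \<noteq> b" using pbb .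
        have "q (p b) \<noteq> p b"
        proof
          assume h: "q (p b) = p b"
          have "p b \<noteq> a" using False .
          with \<open>p b \<noteq> b\<close> have "q (p b) = p (p b)" using qo by simp
          with h have "p (p b) = p b" by simp
          then show False using \<open>p b \<noteq> b\<close> by (simp add: inj_eq[OF inj])
        qed
        then show ?thesis by simp
      qed
      moreover have "p b \<noteq> a" using False .
      ultimately have sub: "{a, p b} \<subseteq> {x. q x \<noteq> x}" by auto
      have finq: "finite {x. q x \<noteq> x}" using Mq finM by simp
      have "card {a, p b} \<le> card {x. q x \<noteq> x}" by (rule card_mono[OF finq sub])
      moreover have "card {a, p b} = 2" using False by simp
      ultimately have N2: "N \<ge> 3" using cq by simp
      have "sign q = (-1)^(N - 1 - 1)"
        using less.IH[of "N - 1"] N2 fS qS hyq qa' cq by auto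
      moreover obtain k where "N = k + 3" using N2 le_Suc_ex[of 3 N] by (auto simp: add.commute)
      ultimately show ?thesis using sp by simp
    qed
  qed
qed

lemma cyc_sign:
  fixes y :: "'b \<Rightarrow> 'c::linorder"
  assumes "finite S" "p permutes S" "\<forall>x. p x \<noteq> x \<and> x \<noteq> a \<longrightarrow> y x < y (p x)" "p a \<noteq> a"
  shows "sign p = (-1)^(card {x. p x \<noteq> x} - 1)"
  using cyc_sign_aux[of S a y] assms by blast

definition rho :: "nat \<Rightarrow> nat \<Rightarrow> nat" where
  "rho i = (\<lambda>x. if x = 0 then i else if x \<le> i then x - 1 else x)"

lemma rho_permutes: "rho i permutes {..i}"
proof (rule bij_imp_permutes)
  show "bij_betw (rho i) {..i} {..i}"
    by (rule bij_betw_byWitness[where f'="\<lambda>x. if x = i then 0 else if x < i then x + 1 else x"])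
       (auto simp: rho_def)
  show "\<And>x. x \<notin> {..i} \<Longrightarrow> rho i x = x" by (auto simp: rho_def)
qed

lemma rho_sign: "sign (rho i) = (-1)^i"
proof (cases "i = 0")
  case True
  then have "rho i = id" by (auto simp: rho_def fun_eq_iff)
  then show ?thesis using True by simp
next
  case False
  have "sign (rho i) = (-1)^(card {x. rho i x \<noteq> x} - 1)"
    by (rule cyc_sign[where S="{..i}" and a=0 and y="\<lambda>x. - int x"])
       (use False rho_permutes in \<open>auto simp: rho_def\<close>)
  moreover have "{x. rho i x \<noteq> x} = {..i}" using False by (auto simp: rho_def)
  ultimately show ?thesis by simp
qed

definition Phi :: "nat \<Rightarrow> nat \<Rightarrow> (nat \<Rightarrow> nat) \<Rightarrow> nat \<Rightarrow> nat" where
  "Phi n i s = (\<lambda>x. if x = 0 then i else if x < n then skip i (s (x - 1)) else x)"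

lemma Phi_props:
  assumes "i < n" "s permutes {..<n-1}"
  shows "Phi n i s permutes {..<n} \<and> Phi n i s 0 = i \<and> sign (Phi n i s) = (-1)^i * sign s"
proof -
  interpret pb: permutes_bij_finite s "{..<n-1}" "{1..<n}" Suc "\<lambda>x. x - 1"
    "\<lambda>x. if x \<in> {1..<n} then Suc (s (x - 1)) else x"
  proof (unfold_locales)
    show "s permutes {..<n - 1}" by fact
    show "bij_betw Suc {..<n - 1} {1..<n}"
      by (rule bij_betw_byWitness[where f'="\<lambda>x. x - 1"]) (use assms in auto)
    show "\<And>x. x \<in> {..<n - 1} \<Longrightarrow> Suc x - 1 = x" by simp
    show "finite {..<n - 1}" by simp
  qed simp
  define sh where "sh = (\<lambda>x. if x \<in> {1..<n} then Suc (s (x - 1)) else x)"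
  have shp: "sh permutes {1..<n}" using pb.permutes_p' unfolding sh_def .
  have shs: "sign sh = sign s" using pb.sign_p' unfolding sh_def .
  have sn: "\<And>x. x < n - 1 \<Longrightarrow> s x < n - 1" using permutes_in_image[OF assms(2)] by simp
  have eq: "Phi n i s = rho i \<circ> sh"
  proof
    fix x
    show "Phi n i s x = (rho i \<circ> sh) x"
    proof (cases "x = 0")
      case True then show ?thesis by (simp add: Phi_def sh_def rho_def)
    next
      case False
      show ?thesis
      proof (cases "x < n")
        case True
        then have "s (x - 1) < n - 1" using False sn by simp
        then show ?thesis using True False by (auto simp: Phi_def sh_def rho_def skip_def)
      next
        case False2: False
        then show ?thesis using assms(1) False by (auto simp: Phi_def sh_def rho_def)
      qed
    qed
  qed
  have p1: "rho i permutes {..<n}" using assms(1) by (intro permutes_subset[OF rho_permutes[of i]]) auto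
  have p2: "sh permutes {..<n}" by (intro permutes_subset[OF shp]) auto
  have "Phi n i s permutes {..<n}" unfolding eq by (rule permutes_compose[OF p2 p1])
  moreover have "sign (Phi n i s) = (-1)^i * sign s" unfolding eq
    using sign_compose[of "rho i" sh] p1 p2 permutes_imp_permutation[of "{..<n}"] rho_sign shs by simp
  ultimately show ?thesis by (simp add: Phi_def)
qed

lemma Phi_surj:
  assumes "i < n" "p permutes {..<n}" "p 0 = i"
  shows "\<exists>s. s permutes {..<n-1} \<and> Phi n i s = p"
proof -
  define s where "s = (\<lambda>r. if r < n - 1 then (if p (Suc r) < i then p (Suc r) else p (Suc r) - 1) else r)"
  have inj: "inj p" using assms(2) permutes_inj by blast
  have pin: "\<And>x. x < n \<Longrightarrow> p x < n" using permutes_in_image[OF assms(2)] by simp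
  have pni: "\<And>r. p (Suc r) \<noteq> i" using assms(3) inj_eq[OF inj] by (metis nat.distinct(1))
  have sin: "\<And>r. r < n - 1 \<Longrightarrow> s r < n - 1"
  proof -
    fix r assume r: "r < n - 1"
    then have "p (Suc r) < n" using pin by simp
    then show "s r < n - 1" using r pni[of r] assms(1) unfolding s_def by auto
  qed
  have sinj: "inj_on s {..<n-1}"
  proof (rule inj_onI)
    fix x y assume xy: "x \<in> {..<n-1}" "y \<in> {..<n-1}" "s x = s y"
    have "p (Suc x) = p (Suc y)"
      using xy pni[of x] pni[of y] unfolding s_def by (auto split: if_splits)
    then show "x = y" using inj by (simp add: inj_eq)
  qed
  have img: "s ` {..<n-1} = {..<n-1}"
    using sinj sin by (intro endo_inj_surj) auto
  have sp: "s permutes {..<n-1}"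
    by (rule bij_imp_permutes) (use sinj img in \<open>auto simp: bij_betw_def s_def\<close>)
  have "Phi n i s = p"
  proof
    fix x
    show "Phi n i s x = p x"
    proof (cases "x = 0")
      case True then show ?thesis using assms(3) by (simp add: Phi_def)
    next
      case False
      show ?thesis
      proof (cases "x < n")
        case True
        then obtain r where r: "x = Suc r" "r < n - 1" using False by (cases x) auto
        then show ?thesis using pni[of r] True False unfolding Phi_def s_def skip_def by auto
      next
        case False2: False
        then show ?thesis using assms(2) False by (simp add: Phi_def permutes_not_in)
      qed
    qed
  qed
  then show ?thesis using sp by blast
qed

lemma Phi_prod:
  fixes F :: "nat \<Rightarrow> nat \<Rightarrow> 'b::comm_monoid_mult"
  assumes "1 \<le> n"
  shows "(\<Prod>r<n-1. F (Suc r) (skip i (s r))) = (\<Prod>r\<in>{1..<n}. F r (Phi n i s r))"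
proof -
  have "{1..<n} = Suc ` {..<n-1}"
  proof (intro set_eqI iffI)
    fix x assume "x \<in> {1..<n}"
    then have "x = Suc (x - 1)" "x - 1 \<in> {..<n-1}" by auto
    then show "x \<in> Suc ` {..<n-1}" by (metis imageI)
  qed auto
  then have "(\<Prod>r\<in>{1..<n}. F r (Phi n i s r)) = (\<Prod>r<n-1. F (Suc r) (Phi n i s (Suc r)))"
    by (simp add: prod.reindex)
  also have "\<dots> = (\<Prod>r<n-1. F (Suc r) (skip i (s r)))"
    by (rule prod.cong) (auto simp: Phi_def)
  finally show ?thesis by simp
qed

lemma grp1:
  fixes a wc wr g dr dc :: "'a::linordered_ab_group_add"
  assumes "a + a < dr + dc" "a + wc = g + wr" "dc \<le> g"
  shows "wr + wr - dr < wc + wc - dc"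
proof -
  have 1: "a + a + dc < dr + dc + dc" using assms(1) by (rule add_strict_right_mono)
  have 2: "dr + dc + dc \<le> dr + g + g" using assms(3) by (simp add: add_mono add.assoc)
  have wr: "wr = a + wc - g" using assms(2) by (simp add: algebra_simps)
  have "a + a + dc < dr + g + g" using 1 2 by (rule less_le_trans)
  then show ?thesis unfolding wr by (simp add: algebra_simps)
qed

lemma grp2:
  fixes a g :: "'a::linordered_ab_group_add"
  assumes "a + a < x + y" "x \<le> g" "y \<le> g" shows "a < g"
proof (rule ccontr)
  assume "\<not> a < g" then have "g \<le> a" by simp
  then have "x + y \<le> a + a" using assms by (meson add_mono order_trans)
  then show False using assms(1) by simp
qed

lemma smult_zero[simp]: "(x::'a::linordered_ab_group_add smax) * 0 = 0"
  by (simp add: mult_eq0)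

locale ctx =
  fixes A :: "'a::linordered_ab_group_add smat" and n :: nat and v :: "nat \<Rightarrow> 'a smax"
  assumes n1: "n \<ge> 1" and tpd: "TPD n A"
    and sorted: "\<forall>i j. i \<le> j \<and> j < n \<longrightarrow> sle (A j j) (A i i)"
    and simple: "n \<ge> 2 \<longrightarrow> sgt (A 0 0) (A 1 1)"
    and ev: "strong_eigenvector n A (A 0 0) v"
begin

definition "g = smag (A 0 0)"
definition "d r = smag (A r r)"
definition "w r = smag (v r)"
definition "y r = w r + w r - d r"
definition "B = (\<lambda>i j. A 0 0 * sident i j \<ominus> A i j)"
definition "Z = {c. c < n \<and> v c = 0}"
definition "R = {1..<n}"

lemma diag_pos: "r < n \<Longrightarrow> A r r = SPos (d r)"
proof -
  assume r: "r < n"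
  then have "slt 0 (A r r)" using tpd unfolding TPD_def by blast
  then have "spositive (A r r)"
    by (simp add: slt_def sdiff_def uminus_smax_def sz plus_smax_def splus_def split: if_splits)
  then show ?thesis unfolding spositive_def d_def by auto
qed

lemma A00: "A 0 0 = SPos g" using diag_pos[of 0] n1 by (simp add: g_def d_def)

lemma d_le: "r < n \<Longrightarrow> d r \<le> g"
proof -
  assume r: "r < n"
  then have "sle (A r r) (A 0 0)" using sorted by simp
  then show ?thesis using diag_pos[OF r] A00
    by (auto simp: sle_def plus_smax_def splus_def split: if_splits)
qed

lemma d_lt: "1 \<le> r \<Longrightarrow> r < n \<Longrightarrow> d r < g"
proof -
  assume r: "1 \<le> r" "r < n"
  then have n2: "n \<ge> 2" by simp
  have "sle (A r r) (A 1 1)" using sorted r by simp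
  then have "d r \<le> d 1" using diag_pos[OF r(2)] diag_pos[of 1] n2
    by (auto simp: sle_def plus_smax_def splus_def split: if_splits)
  moreover have "sgt (A 0 0) (A 1 1)" using simple n2 by simp
  then have "d 1 < g" using diag_pos[of 1] n2 A00
    by (auto simp: sgt_def sle_def plus_smax_def splus_def split: if_splits)
  ultimately show ?thesis by simp
qed

lemma off_signed: "r < n \<Longrightarrow> c < n \<Longrightarrow> signed (A r c)"
  using tpd unfolding TPD_def by blast

lemma off_sq: "r < n \<Longrightarrow> c < n \<Longrightarrow> r \<noteq> c \<Longrightarrow> A r c \<noteq> 0 \<Longrightarrow> smag (A r c) + smag (A r c) < d r + d c"
proof -
  assume rc: "r < n" "c < n" "r \<noteq> c" "A r c \<noteq> 0"
  have "slt ((A r c)^2) (A r r * A c c)" using tpd rc unfolding TPD_def by blast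
  moreover have "signed (A r c)" using off_signed rc by simp
  ultimately show ?thesis using diag_pos[OF rc(1)] diag_pos[OF rc(2)] rc(4)
    by (cases "A r c")
       (auto simp: slt_def sdiff_def spositive_def power2_eq_square times_smax_def
          uminus_smax_def plus_smax_def splus_def sz signed_def split: if_splits)
qed

lemma off_lt_g: "r < n \<Longrightarrow> c < n \<Longrightarrow> r \<noteq> c \<Longrightarrow> A r c \<noteq> 0 \<Longrightarrow> smag (A r c) < g"
  using grp2[OF off_sq d_le d_le] by blast

lemma B_diag: "1 \<le> r \<Longrightarrow> r < n \<Longrightarrow> B r r = SPos g"
  using d_lt[of r] diag_pos[of r] A00
  by (simp add: B_def sident_def sdiff_def so times_smax_def uminus_smax_def plus_smax_def splus_def)

lemma B_off: "r \<noteq> c \<Longrightarrow> B r c = - A r c"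
  by (simp add: B_def sident_def sdiff_def smult_zero)

lemma B_signed: "1 \<le> r \<Longrightarrow> r < n \<Longrightarrow> c < n \<Longrightarrow> signed (B r c)"
  by (cases "r = c") (simp_all add: B_diag B_off signed_minus off_signed, simp add: signed_def)

lemma v_signed: "c < n \<Longrightarrow> signed (v c)"
  using ev unfolding strong_eigenvector_def by blast

lemma row_eq: "r < n \<Longrightarrow> (\<Sum>j<n. A r j * v j) = A 0 0 * v r"
  using ev unfolding strong_eigenvector_def by blast

lemma row_le: "r < n \<Longrightarrow> c < n \<Longrightarrow> sle (A r c * v c) (A 0 0 * v r)"
  using sle_term[of "{..<n}" c "\<lambda>j. A r j * v j"] row_eq[of r] by simp

lemma Z_row: "r < n \<Longrightarrow> v r = 0 \<Longrightarrow> c < n \<Longrightarrow> A r c \<noteq> 0 \<Longrightarrow> v c = 0"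
proof -
  assume h: "r < n" "v r = 0" "c < n" "A r c \<noteq> 0"
  have "sle (A r c * v c) 0" using row_le[OF h(1,3)] h(2) by (simp add: smult_zero)
  then have "A r c * v c = 0" by (simp add: sle_def)
  then show ?thesis using h(4) by (simp add: mult_eq0)
qed

end

context ctx begin

lemma A0nz: "A 0 0 \<noteq> 0" by (simp add: A00 sz)
lemma A0s: "signed (A 0 0)" by (simp add: A00 signed_def)

lemma sg_pm: "c < n \<Longrightarrow> v c \<noteq> 0 \<Longrightarrow> sg (v c) * sg (v c) = 1"
  using sg_sq v_signed by blast

lemma tight_exists:
  assumes r: "1 \<le> r" "r < n" and vr: "v r \<noteq> 0"
  shows "\<exists>c<n. c \<noteq> r \<and> A r c * v c = A 0 0 * v r"
proof (rule ccontr)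
  assume nt: "\<not> ?thesis"
  define Y where "Y = A 0 0 * v r"
  have Ys: "signed Y" "Y \<noteq> 0" using v_signed[OF r(2)] vr
    by (auto simp: Y_def signed_mult mult_eq0 A0nz A0s)
  have smY: "smag Y = g + w r" using vr A00 by (simp add: Y_def smag_mult w_def sz)
  have "\<forall>j\<in>{..<n}. sbelow Y (A r j * v j)"
  proof
    fix j assume j: "j \<in> {..<n}"
    show "sbelow Y (A r j * v j)"
    proof (cases "j = r")
      case True
      have "smag (A r j * v j) = d r + w r"
        using True diag_pos[OF r(2)] vr by (simp add: smag_mult w_def sz)
      moreover have "d r + w r < g + w r" using d_lt[OF r] by simp
      ultimately show ?thesis using smY by (simp add: sbelow_def)
    next
      case False
      have s: "signed (A r j * v j)" using off_signed[OF r(2)] v_signed j by (simp add: signed_mult)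
      have "sle (A r j * v j) Y" unfolding Y_def using row_le[OF r(2)] j by simp
      moreover have "A r j * v j \<noteq> Y" using nt False j unfolding Y_def by auto
      ultimately show ?thesis using sle_char[OF s Ys] by (auto simp: sbelow_def)
    qed
  qed
  then have "sbelow Y (\<Sum>j<n. A r j * v j)" by (intro sbelow_sum) auto
  then have "sbelow Y Y" using row_eq[OF r(2)] by (simp add: Y_def)
  then show False using Ys by (simp add: sbelow_def)
qed

lemma tight_facts:
  assumes rc: "r < n" "c < n" "r \<noteq> c" and t: "A r c * v c = A 0 0 * v r" and vr: "v r \<noteq> 0"
  shows "v c \<noteq> 0 \<and> A r c \<noteq> 0 \<and> smag (A r c) + w c = g + w r \<and> sg (A r c) * sg (v c) = sg (v r)
     \<and> y r < y c"
proof -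
  have nz: "A r c * v c \<noteq> 0" using t vr A00 by (cases "v r") (auto simp: times_smax_def sz)
  then have nz2: "v c \<noteq> 0" "A r c \<noteq> 0" by (auto simp: mult_eq0)
  have e: "smag (A r c) + w c = g + w r"
    using arg_cong[OF t, of smag] nz2 vr A00 by (simp add: smag_mult w_def sz)
  have s: "sg (A r c) * sg (v c) = sg (v r)"
    using arg_cong[OF t, of sg] A00 by (simp add: sg_mult)
  have "y r < y c" unfolding y_def
    by (rule grp1[OF off_sq[OF rc nz2(2)] e d_le[OF rc(2)]])
  then show ?thesis using nz2 e s by simp
qed

lemma v0_nz: "v 0 \<noteq> 0"
proof -
  define N where "N = {c. c < n \<and> v c \<noteq> 0}"
  have fin: "finite N" unfolding N_def by simp
  have ne: "N \<noteq> {}" using ev unfolding strong_eigenvector_def N_def by auto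
  define m where "m = Max (y ` N)"
  have "m \<in> y ` N" unfolding m_def using fin ne by (intro Max_in) auto
  then obtain x where x: "x \<in> N" "y x = m" by auto
  have ge: "\<forall>x'\<in>N. y x' \<le> m" unfolding m_def using fin by auto
  show ?thesis
  proof (cases "x = 0")
    case True then show ?thesis using x unfolding N_def by simp
  next
    case False
    then obtain c where c: "c < n" "c \<noteq> x" "A x c * v c = A 0 0 * v x"
      using tight_exists[of x] x unfolding N_def by auto
    have "v c \<noteq> 0 \<and> y x < y c" using tight_facts[of x c] c x unfolding N_def by auto
    then have "c \<in> N" "y x < y c" using c unfolding N_def by auto
    then show ?thesis using ge x by force
  qed
qed

end

context ctx begin

definition "bnd p r = (if r \<in> Z then g else g + w r - w (p r))"
definition "K i = (\<Sum>r\<in>R. g) + w i - w 0"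
definition "P p = (\<Prod>r\<in>R. B r (p r))"

lemma perm_lt: "p permutes {..<n} \<Longrightarrow> x < n \<Longrightarrow> p x < n"
  using permutes_in_image[of p "{..<n}" x] by simp

lemma row_bound:
  assumes pp: "p permutes {..<n}" and r: "r \<in> R" and nz: "B r (p r) \<noteq> 0"
    and cl: "r \<notin> Z \<Longrightarrow> p r \<notin> Z"
  shows "smag (B r (p r)) \<le> bnd p r \<and> (smag (B r (p r)) = bnd p r \<longrightarrow>
     (r \<in> Z \<longrightarrow> p r = r) \<and>
     (r \<notin> Z \<longrightarrow> sg (B r (p r)) = sg (v r) * sg (v (p r)) * (if p r = r then 1 else -1)) \<and>
     (p r \<noteq> r \<longrightarrow> y r < y (p r)))"
proof -
  have r1: "1 \<le> r" "r < n" using r by (auto simp: R_def)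
  define c where "c = p r"
  have cn: "c < n" using perm_lt[OF pp r1(2)] by (simp add: c_def)
  show ?thesis
  proof (cases "c = r")
    case True
    have "B r (p r) = SPos g" using True B_diag[OF r1] by (simp add: c_def)
    moreover have "r \<notin> Z \<Longrightarrow> sg (v r) * sg (v r) = 1" using sg_pm[OF r1(2)] by (simp add: Z_def r1)
    ultimately show ?thesis using True by (auto simp: bnd_def c_def)
  next
    case False
    have Bc: "B r c = - A r c" using B_off False by simp
    have Anz: "A r c \<noteq> 0" using nz Bc by (simp add: c_def minus_eq0)
    show ?thesis
    proof (cases "r \<in> Z")
      case True
      have "smag (A r c) < g" using off_lt_g[OF r1(2) cn _ Anz] False by simp
      then show ?thesis using True Bc by (auto simp: bnd_def c_def smag_minus)
    next
      case rZ: False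
      have vr: "v r \<noteq> 0" using rZ r1 by (simp add: Z_def)
      have vc: "v c \<noteq> 0" using cl[OF rZ] cn by (simp add: Z_def c_def)
      have sp: "signed (A r c * v c)" using off_signed[OF r1(2) cn] v_signed[OF cn] by (simp add: signed_mult)
      have Ys: "signed (A 0 0 * v r)" "A 0 0 * v r \<noteq> 0"
        using v_signed[OF r1(2)] vr by (auto simp: signed_mult mult_eq0 A0nz A0s)
      have le: "sle (A r c * v c) (A 0 0 * v r)" by (rule row_le[OF r1(2) cn])
      have "A r c * v c = 0 \<or> smag (A r c * v c) < smag (A 0 0 * v r) \<or> A r c * v c = A 0 0 * v r"
        using sle_char[OF sp Ys] le by simp
      then show ?thesis
      proof (elim disjE)
        assume "A r c * v c = 0" then show ?thesis using Anz vc by (simp add: mult_eq0)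
      next
        assume lt: "smag (A r c * v c) < smag (A 0 0 * v r)"
        then have "smag (A r c) + w c < g + w r"
          using Anz vc vr by (simp add: smag_mult w_def A0nz g_def)
        then have "smag (A r c) < g + w r - w c" by (simp add: less_diff_eq)
        then show ?thesis using rZ Bc False by (auto simp: bnd_def c_def smag_minus)
      next
        assume t: "A r c * v c = A 0 0 * v r"
        have tf: "smag (A r c) + w c = g + w r" "sg (A r c) * sg (v c) = sg (v r)" "y r < y c"
          using tight_facts[OF r1(2) cn _ t vr] False by auto
        have e: "smag (B r c) = g + w r - w c" using tf(1) Bc by (simp add: smag_minus eq_diff_eq)
        have "sg (A r c) = sg (A r c) * (sg (v c) * sg (v c))" using sg_pm[OF cn vc] by simp
        also have "\<dots> = sg (v r) * sg (v c)" using tf(2) by (simp add: mult.assoc[symmetric])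
        finally have "sg (A r c) = sg (v r) * sg (v c)" .
        then have "sg (B r c) = sg (v r) * sg (v c) * -1" using Bc by (simp add: sg_minus)
        then show ?thesis using e rZ False tf(3) by (simp add: bnd_def c_def)
      qed
    qed
  qed
qed

lemma Z_maps:
  assumes pp: "p permutes {..<n}" and nz: "\<forall>r\<in>R. B r (p r) \<noteq> 0" and rZ: "r \<in> Z"
  shows "p r \<in> Z"
proof -
  have r: "r < n" "v r = 0" using rZ by (auto simp: Z_def)
  have r1: "1 \<le> r" using r v0_nz by (cases r) auto
  have pr: "p r < n" using perm_lt[OF pp r(1)] .
  show ?thesis
  proof (cases "p r = r")
    case True then show ?thesis using rZ by simp
  next
    case False
    have "B r (p r) \<noteq> 0" using nz r r1 by (auto simp: R_def)
    then have "A r (p r) \<noteq> 0" using B_off[of r "p r"] False by (auto simp: minus_eq0)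
    then have "v (p r) = 0" using Z_row[OF r(1) r(2) pr] by simp
    then show ?thesis using pr by (simp add: Z_def)
  qed
qed

lemma Z_closed:
  assumes pp: "p permutes {..<n}" and nz: "\<forall>r\<in>R. B r (p r) \<noteq> 0"
  shows "p ` Z = Z"
proof -
  have "p ` Z \<subseteq> Z" using Z_maps[OF pp nz] by auto
  moreover have "inj_on p Z" using permutes_inj[OF pp] by (rule inj_on_subset) simp
  moreover have "finite Z" by (simp add: Z_def)
  ultimately show ?thesis by (intro endo_inj_surj) auto
qed

lemma core_c:
  assumes i: "i < n" "v i = 0" and pp: "p permutes {..<n}" and p0: "p 0 = i"
  shows "P p = 0"
proof (rule ccontr)
  assume "P p \<noteq> 0"
  then have nz: "\<forall>r\<in>R. B r (p r) \<noteq> 0" unfolding P_def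
    using prod_props[of R "\<lambda>r. B r (p r)"] B_signed perm_lt[OF pp] by (auto simp: R_def)
  have inj: "inj p" using permutes_inj[OF pp] .
  have sub: "p ` (insert 0 Z) \<subseteq> Z" using Z_maps[OF pp nz] p0 i by (auto simp: Z_def)
  have fin: "finite Z" by (simp add: Z_def)
  have "0 \<notin> Z" using v0_nz by (simp add: Z_def)
  moreover have "inj_on p (insert 0 Z)" using inj by (rule inj_on_subset) simp
  ultimately have "card (p ` (insert 0 Z)) = card Z + 1"
    using fin by (simp add: card_image)
  moreover have "card (p ` (insert 0 Z)) \<le> card Z" using card_mono[OF fin sub] .
  ultimately show False by simp
qed

end

lemma neg1_sq: "((-1::int)^k) * (-1)^k = 1" by (induct k) auto

context ctx begin

definition "NZ = {..<n} - Z"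

lemma zero_NZ: "0 \<in> NZ" using v0_nz n1 by (simp add: NZ_def Z_def)
lemma i_NZ: "i < n \<Longrightarrow> v i \<noteq> 0 \<Longrightarrow> i \<in> NZ" by (simp add: NZ_def Z_def)
lemma finNZ: "finite NZ" by (simp add: NZ_def)
lemma RZ: "R - Z = NZ - {0}" by (auto simp: R_def NZ_def Z_def)

lemma img_NZ:
  assumes pp: "p permutes {..<n}" and p0: "p 0 = i" and pZ: "p ` Z = Z"
  shows "p ` (NZ - {0}) = NZ - {i}"
proof -
  have inj: "inj p" using permutes_inj[OF pp] .
  have "p ` (NZ - {0}) = p ` NZ - p ` {0}" by (rule image_set_diff[OF inj])
  also have "p ` NZ = p ` {..<n} - p ` Z" unfolding NZ_def by (rule image_set_diff[OF inj])
  also have "p ` {..<n} = {..<n}" by (rule permutes_image[OF pp])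
  finally show ?thesis using pZ p0 by (simp add: NZ_def)
qed

lemma bnd_sum:
  assumes i: "i < n" "v i \<noteq> 0" and pp: "p permutes {..<n}" and p0: "p 0 = i" and pZ: "p ` Z = Z"
  shows "(\<Sum>r\<in>R. bnd p r) = K i"
proof -
  define h where "h r = (if r \<in> Z then 0 else w r - w (p r))" for r
  have "(\<Sum>r\<in>R. bnd p r) = (\<Sum>r\<in>R. g + h r)"
    by (rule sum.cong) (auto simp: bnd_def h_def)
  also have "\<dots> = (\<Sum>r\<in>R. g) + (\<Sum>r\<in>R. h r)" by (simp add: sum.distrib)
  also have "(\<Sum>r\<in>R. h r) = (\<Sum>r\<in>R - Z. h r)"
    by (rule sum.mono_neutral_right) (auto simp: R_def h_def)
  also have "\<dots> = (\<Sum>r\<in>NZ - {0}. w r - w (p r))"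
    unfolding RZ by (rule sum.cong) (auto simp: h_def NZ_def)
  also have "\<dots> = (\<Sum>r\<in>NZ - {0}. w r) - (\<Sum>r\<in>NZ - {0}. w (p r))" by (simp add: sum_subtractf)
  also have "(\<Sum>r\<in>NZ - {0}. w (p r)) = (\<Sum>r\<in>p ` (NZ - {0}). w r)"
  proof -
    have "inj_on p (NZ - {0})" using permutes_inj[OF pp] by (rule inj_on_subset) simp
    then show ?thesis by (simp add: sum.reindex)
  qed
  also have "p ` (NZ - {0}) = NZ - {i}" by (rule img_NZ[OF pp p0 pZ])
  also have "(\<Sum>r\<in>NZ - {0}. w r) = (\<Sum>r\<in>NZ. w r) - w 0"
    using sum_diff1[OF finNZ, of w 0] zero_NZ by simp
  also have "(\<Sum>r\<in>NZ - {i}. w r) = (\<Sum>r\<in>NZ. w r) - w i"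
    using sum_diff1[OF finNZ, of w i] i_NZ[OF i] by simp
  finally show ?thesis by (simp add: K_def algebra_simps)
qed

lemma sign_part:
  assumes i: "i < n" "v i \<noteq> 0" and pp: "p permutes {..<n}" and p0: "p 0 = i" and pZ: "p ` Z = Z"
    and hZ: "\<forall>r\<in>R \<inter> Z. p r = r"
    and hs: "\<forall>r\<in>R - Z. sg (B r (p r)) = sg (v r) * sg (v (p r)) * (if p r = r then 1 else -1)"
    and hy: "\<forall>r\<in>R. p r \<noteq> r \<longrightarrow> y r < y (p r)"
  shows "sign p * (\<Prod>r\<in>R. sg (B r (p r))) = sg (v i) * sg (v 0)"
proof -
  define eps where "eps r = (if p r = r then 1 else -1::int)" for r
  define hh where "hh r = (if r \<in> Z then 1 else sg (v r) * sg (v (p r)))" for r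
  have "(\<Prod>r\<in>R. sg (B r (p r))) = (\<Prod>r\<in>R. eps r * hh r)"
  proof (rule prod.cong)
    fix r assume r: "r \<in> R"
    show "sg (B r (p r)) = eps r * hh r"
    proof (cases "r \<in> Z")
      case True
      then have "p r = r" using hZ r by auto
      then show ?thesis using True B_diag[of r] r by (simp add: eps_def hh_def R_def)
    next
      case False
      then show ?thesis using hs r by (simp add: eps_def hh_def)
    qed
  qed simp
  also have "\<dots> = (\<Prod>r\<in>R. eps r) * (\<Prod>r\<in>R. hh r)" by (simp add: prod.distrib)
  finally have split: "(\<Prod>r\<in>R. sg (B r (p r))) = (\<Prod>r\<in>R. eps r) * (\<Prod>r\<in>R. hh r)" .
  define sv where "sv r = sg (v r)" for r
  have "(\<Prod>r\<in>R. hh r) = (\<Prod>r\<in>R - Z. hh r)"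
    by (rule prod.mono_neutral_right) (auto simp: R_def hh_def)
  also have "\<dots> = (\<Prod>r\<in>NZ - {0}. sv r * sv (p r))"
    unfolding RZ by (rule prod.cong) (auto simp: hh_def NZ_def sv_def)
  also have "\<dots> = (\<Prod>r\<in>NZ - {0}. sv r) * (\<Prod>r\<in>NZ - {0}. sv (p r))" by (simp add: prod.distrib)
  also have "(\<Prod>r\<in>NZ - {0}. sv (p r)) = (\<Prod>r\<in>p ` (NZ - {0}). sv r)"
  proof -
    have "inj_on p (NZ - {0})" using permutes_inj[OF pp] by (rule inj_on_subset) simp
    then show ?thesis by (simp add: prod.reindex)
  qed
  also have "p ` (NZ - {0}) = NZ - {i}" by (rule img_NZ[OF pp p0 pZ])
  finally have hh1: "(\<Prod>r\<in>R. hh r) = (\<Prod>r\<in>NZ - {0}. sv r) * (\<Prod>r\<in>NZ - {i}. sv r)" .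
  define Q where "Q = (\<Prod>r\<in>NZ. sv r)"
  have sq: "\<And>r. r \<in> NZ \<Longrightarrow> sv r * sv r = 1" using sg_pm by (auto simp: sv_def NZ_def Z_def)
  have QQ: "Q * Q = 1"
  proof -
    have "Q * Q = (\<Prod>r\<in>NZ. sv r * sv r)" by (simp add: Q_def prod.distrib)
    also have "\<dots> = 1" using sq by (intro prod.neutral) auto
    finally show ?thesis .
  qed
  have rem: "(\<Prod>r\<in>NZ - {a}. sv r) = sv a * Q" if a: "a \<in> NZ" for a
  proof -
    have "Q = sv a * (\<Prod>r\<in>NZ - {a}. sv r)" unfolding Q_def using a finNZ by (simp add: prod.remove)
    then have "sv a * Q = (sv a * sv a) * (\<Prod>r\<in>NZ - {a}. sv r)" by (simp add: mult.assoc)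
    then show ?thesis using sq[OF a] by simp
  qed
  have hh2: "(\<Prod>r\<in>R. hh r) = sv 0 * sv i"
  proof -
    have "(\<Prod>r\<in>R. hh r) = (sv 0 * Q) * (sv i * Q)" using hh1 rem zero_NZ i_NZ[OF i] by simp
    also have "\<dots> = sv 0 * sv i * (Q * Q)" by (simp add: algebra_simps)
    finally show ?thesis using QQ by simp
  qed
  have fin: "finite R" by (simp add: R_def)
  have epsprod: "(\<Prod>r\<in>R. eps r) = (-1)^card (R \<inter> - {x. p x = x})"
    unfolding eps_def using prod.If_cases[OF fin, of "\<lambda>r. p r = r" "\<lambda>_. 1" "\<lambda>_. -1::int"]
    by simp
  have sgn: "sign p * (\<Prod>r\<in>R. eps r) = 1"
  proof (cases "i = 0")
    case True
    have "p = id"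
      by (rule fix_id[where S="{..<n}" and a=0 and y=y])
         (use pp p0 True hy permutes_not_in[OF pp] in \<open>auto simp: R_def\<close>)
    then show ?thesis unfolding eps_def by simp
  next
    case False
    define M where "M = {x. p x \<noteq> x}"
    have Msub: "M \<subseteq> {..<n}" using permutes_not_in[OF pp] by (auto simp: M_def)
    have "sign p = (-1)^(card M - 1)" unfolding M_def
      by (rule cyc_sign[where S="{..<n}" and a=0 and y=y])
         (use pp p0 False hy permutes_not_in[OF pp] in \<open>auto simp: R_def\<close>)
    moreover have "R \<inter> - {x. p x = x} = M - {0}" using Msub by (auto simp: R_def M_def)
    moreover have "card (M - {0}) = card M - 1"
      using p0 False Msub by (simp add: M_def)
    ultimately show ?thesis using epsprod neg1_sq by simp
  qed
  show ?thesis using split hh2 sgn by (simp add: sv_def algebra_simps)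
qed

end

context ctx begin

lemma P_nz:
  assumes pp: "p permutes {..<n}" and nzP: "P p \<noteq> 0"
  shows "\<forall>r\<in>R. B r (p r) \<noteq> 0"
  using nzP unfolding P_def
  using prod_props[of R "\<lambda>r. B r (p r)"] B_signed perm_lt[OF pp] by (auto simp: R_def)

lemma P_props:
  assumes pp: "p permutes {..<n}"
  shows "signed (P p) \<and> sg (P p) = (\<Prod>r\<in>R. sg (B r (p r))) \<and>
     (P p \<noteq> 0 \<longrightarrow> smag (P p) = (\<Sum>r\<in>R. smag (B r (p r))))"
proof -
  have "\<forall>r\<in>R. signed (B r (p r))" using B_signed perm_lt[OF pp] by (auto simp: R_def)
  then show ?thesis using prod_props[of R "\<lambda>r. B r (p r)"] unfolding P_def by (auto simp: R_def)
qed

lemma core_a: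
  assumes i: "i < n" "v i \<noteq> 0" and pp: "p permutes {..<n}" and p0: "p 0 = i" and nzP: "P p \<noteq> 0"
  shows "(\<Sum>r\<in>R. smag (B r (p r))) \<le> K i \<and>
    ((\<Sum>r\<in>R. smag (B r (p r))) = K i \<longrightarrow> sign p * (\<Prod>r\<in>R. sg (B r (p r))) = sg (v i) * sg (v 0))"
proof -
  have nz: "\<forall>r\<in>R. B r (p r) \<noteq> 0" by (rule P_nz[OF pp nzP])
  have pZ: "p ` Z = Z" by (rule Z_closed[OF pp nz])
  have inj: "inj p" using permutes_inj[OF pp] .
  have cl: "p r \<notin> Z" if "r \<notin> Z" for r
  proof
    assume "p r \<in> Z"
    then obtain z where "z \<in> Z" "p z = p r" using pZ by (metis imageE)
    then have "z = r" using inj by (simp add: inj_def)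
    then show False using that \<open>z \<in> Z\<close> by simp
  qed
  have rb: "\<And>r. r \<in> R \<Longrightarrow> smag (B r (p r)) \<le> bnd p r \<and> (smag (B r (p r)) = bnd p r \<longrightarrow>
     (r \<in> Z \<longrightarrow> p r = r) \<and>
     (r \<notin> Z \<longrightarrow> sg (B r (p r)) = sg (v r) * sg (v (p r)) * (if p r = r then 1 else -1)) \<and>
     (p r \<noteq> r \<longrightarrow> y r < y (p r)))"
    using row_bound[OF pp] nz cl by blast
  have fin: "finite R" by (simp add: R_def)
  have le: "(\<Sum>r\<in>R. smag (B r (p r))) \<le> (\<Sum>r\<in>R. bnd p r)"
    using rb by (intro sum_mono) blast
  have bs: "(\<Sum>r\<in>R. bnd p r) = K i" by (rule bnd_sum[OF i pp p0 pZ])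
  have "sign p * (\<Prod>r\<in>R. sg (B r (p r))) = sg (v i) * sg (v 0)"
    if eq: "(\<Sum>r\<in>R. smag (B r (p r))) = K i"
  proof -
    have all: "\<forall>r\<in>R. smag (B r (p r)) = bnd p r"
    proof (rule ccontr)
      assume "\<not> ?thesis"
      then have "\<exists>r\<in>R. smag (B r (p r)) < bnd p r" using rb by (meson order_le_less)
      then have "(\<Sum>r\<in>R. smag (B r (p r))) < (\<Sum>r\<in>R. bnd p r)"
        using rb fin by (intro sum_strict_mono_ex1) auto
      then show False using eq bs by simp
    qed
    show ?thesis
    proof (rule sign_part[OF i pp p0 pZ])
      show "\<forall>r\<in>R \<inter> Z. p r = r" using rb all by blast
      show "\<forall>r\<in>R - Z. sg (B r (p r)) = sg (v r) * sg (v (p r)) * (if p r = r then 1 else -1)"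
        using rb all by blast
      show "\<forall>r\<in>R. p r \<noteq> r \<longrightarrow> y r < y (p r)" using rb all by blast
    qed
  qed
  then show ?thesis using le bs by simp
qed

end

context ctx begin

lemma good_perm:
  assumes i: "i < n" "v i \<noteq> 0" and pp: "p permutes {..<n}" and p0: "p 0 = i" and pZ: "p ` Z = Z"
    and all: "\<forall>r\<in>R. B r (p r) \<noteq> 0 \<and> smag (B r (p r)) = bnd p r"
  shows "P p \<noteq> 0 \<and> (\<Sum>r\<in>R. smag (B r (p r))) = K i"
proof -
  have "\<forall>r\<in>R. signed (B r (p r))" using B_signed perm_lt[OF pp] by (auto simp: R_def)
  then have "P p \<noteq> 0" using prod_props[of R "\<lambda>r. B r (p r)"] all unfolding P_def by (auto simp: R_def)
  moreover have "(\<Sum>r\<in>R. smag (B r (p r))) = (\<Sum>r\<in>R. bnd p r)" using all by simp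
  ultimately show ?thesis using bnd_sum[OF i pp p0 pZ] by simp
qed

lemma core_b:
  assumes i: "i < n" "v i \<noteq> 0"
  shows "\<exists>p. p permutes {..<n} \<and> p 0 = i \<and> P p \<noteq> 0 \<and> (\<Sum>r\<in>R. smag (B r (p r))) = K i"
proof (cases "i = 0")
  case True
  have "\<forall>r\<in>R. B r (id r) \<noteq> 0 \<and> smag (B r (id r)) = bnd id r"
    using B_diag by (auto simp: R_def bnd_def sz)
  moreover have "id 0 = i" "id ` Z = Z" using True by auto
  ultimately have "P id \<noteq> 0 \<and> (\<Sum>r\<in>R. smag (B r (id r))) = K i"
    using good_perm[OF i permutes_id] by blast
  then show ?thesis using True by (intro exI[of _ id]) (simp add: permutes_id)
next
  case False
  define f where "f r = (SOME c. c < n \<and> c \<noteq> r \<and> A r c * v c = A 0 0 * v r)" for r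
  have fprop: "f r < n \<and> f r \<noteq> r \<and> A r (f r) * v (f r) = A 0 0 * v r \<and> v (f r) \<noteq> 0 \<and> y r < y (f r)"
    if r: "r \<noteq> 0" "r < n" "v r \<noteq> 0" for r
  proof -
    have "\<exists>c. c < n \<and> c \<noteq> r \<and> A r c * v c = A 0 0 * v r" using tight_exists[of r] r by auto
    then have c: "f r < n \<and> f r \<noteq> r \<and> A r (f r) * v (f r) = A 0 0 * v r"
      unfolding f_def by (rule someI_ex)
    then show ?thesis using tight_facts[of r "f r"] r by auto
  qed
  define sq where "sq k = (f ^^ k) i" for k
  have sqS: "sq (Suc k) = f (sq k)" for k by (simp add: sq_def)
  have sq0: "sq 0 = i" by (simp add: sq_def)
  have step: "sq (Suc k) < n \<and> v (sq (Suc k)) \<noteq> 0 \<and> y (sq k) < y (sq (Suc k))"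
    if "sq k \<noteq> 0" "sq k < n" "v (sq k) \<noteq> 0" for k
    using fprop[OF that] sqS by simp
  have ex: "\<exists>m. sq m = 0"
  proof (rule ccontr)
    assume "\<not> ?thesis"
    then have nz: "\<And>k. sq k \<noteq> 0" by auto
    have inv: "sq k < n \<and> v (sq k) \<noteq> 0" for k
    proof (induction k)
      case 0 then show ?case using i sq0 by simp
    next
      case (Suc k) then show ?case using step nz by blast
    qed
    have "strict_mono (y \<circ> sq)" unfolding strict_mono_Suc_iff using step nz inv by simp
    then have "inj (y \<circ> sq)" by (auto intro!: inj_onI dest: strict_mono_eq)
    then have "inj sq" by (rule inj_on_imageI2)
    moreover have "sq ` UNIV \<subseteq> {..<n}" using inv by auto
    moreover have "finite (sq ` UNIV)" using calculation(2) by (rule finite_subset) simp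
    ultimately have "finite (UNIV :: nat set)" using finite_imageD[of sq UNIV] by blast
    then show False by simp
  qed
  define m where "m = (LEAST k. sq k = 0)"
  have sm: "sq m = 0" unfolding m_def using ex by (rule LeastI_ex)
  have before: "k < m \<Longrightarrow> sq k \<noteq> 0" for k unfolding m_def by (rule not_less_Least)
  have m0: "m > 0" using sm sq0 False by (cases m) auto
  have inv: "k \<le> m \<longrightarrow> sq k < n \<and> v (sq k) \<noteq> 0" for k
  proof (induction k)
    case 0 then show ?case using i sq0 by simp
  next
    case (Suc k) then show ?case using step before by auto
  qed
  have incr: "k < m \<Longrightarrow> y (sq k) < y (sq (Suc k))" for k using step before inv by simp
  have mono: "k < k' \<Longrightarrow> k' \<le> m \<Longrightarrow> y (sq k) < y (sq k')" for k k'
  proof (induction k')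
    case 0 then show ?case by simp
  next
    case (Suc k')
    show ?case
    proof (cases "k = k'")
      case True then show ?thesis using incr Suc.prems by simp
    next
      case False
      then have "y (sq k) < y (sq k')" using Suc by simp
      also have "\<dots> < y (sq (Suc k'))" using incr Suc.prems by simp
      finally show ?thesis .
    qed
  qed
  have injm: "k = k'" if "k \<le> m" "k' \<le> m" "sq k = sq k'" for k k'
  proof (rule ccontr)
    assume "k \<noteq> k'"
    then consider "k < k'" | "k' < k" by linarith
    then show False
    proof cases
      case 1 then show False using mono[of k k'] that by simp
    next
      case 2 then show False using mono[of k' k] that by simp
    qed
  qed
  define D where "D = sq ` {..m}"
  define C where "C = sq ` {..<m}"
  define nxt where "nxt k = (if k = m then 0 else Suc k)" for k
  define p where "p x = (if x = 0 then i else if x \<in> C then f x else x)" for x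
  have pD: "p (sq k) = sq (nxt k)" if "k \<le> m" for k
  proof (cases "k = m")
    case True then show ?thesis using sm sq0 by (simp add: p_def nxt_def)
  next
    case False
    then have "k < m" using that by simp
    then show ?thesis using before[of k] False by (auto simp: p_def nxt_def C_def sqS)
  qed
  have nxtm: "k \<le> m \<Longrightarrow> nxt k \<le> m" for k by (auto simp: nxt_def)
  have Dn: "x \<in> D \<Longrightarrow> x < n \<and> v x \<noteq> 0" for x using inv by (auto simp: D_def)
  have pout: "x \<notin> D \<Longrightarrow> p x = x" for x
  proof -
    assume x: "x \<notin> D"
    have "0 \<in> D" using sm by (auto simp: D_def)
    then have "x \<noteq> 0" using x by (intro notI) simp
    moreover have "x \<notin> C" using x by (auto simp: C_def D_def)
    ultimately show "p x = x" by (simp add: p_def)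
  qed
  have pinD: "p x \<in> D" if x: "x \<in> D" for x
  proof -
    obtain k where k: "k \<le> m" "x = sq k" using x unfolding D_def by blast
    have "p x = sq (nxt k)" using pD[OF k(1)] k(2) by simp
    moreover have "nxt k \<in> {..m}" using nxtm[OF k(1)] by simp
    ultimately show ?thesis unfolding D_def by blast
  qed
  have injp: "inj_on p {..<n}"
  proof (rule inj_onI)
    fix x x' assume xx: "x \<in> {..<n}" "x' \<in> {..<n}" "p x = p x'"
    have mixed: False if a: "a \<in> D" "b \<notin> D" "p a = p b" for a b
    proof -
      have a1: "p a \<in> D" by (rule pinD[OF a(1)])
      have a2: "p b = b" by (rule pout[OF a(2)])
      have "b = p a" using a(3) a2 by simp
      then have "b \<in> D" using a1 by (simp only:)
      with a(2) show False by (simp only: not_True_eq_False)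
    qed
    show "x = x'"
    proof (cases "x \<in> D")
      case True
      show ?thesis
      proof (cases "x' \<in> D")
        case True2: True
        obtain k where k: "k \<le> m" "x = sq k" using True by (auto simp: D_def)
        obtain k' where k': "k' \<le> m" "x' = sq k'" using True2 by (auto simp: D_def)
        have e1: "p x = sq (nxt k)" using pD[OF k(1)] k(2) by simp
        have e2: "p x' = sq (nxt k')" using pD[OF k'(1)] k'(2) by simp
        have "sq (nxt k) = sq (nxt k')" using xx(3) e1 e2 by simp
        then have "nxt k = nxt k'" by (rule injm[OF nxtm[OF k(1)] nxtm[OF k'(1)]])
        then have "k = k'" using k(1) k'(1) unfolding nxt_def by (auto split: if_splits)
        then show ?thesis using k(2) k'(2) by simp
      next
        case False
        then show ?thesis using mixed[OF True False xx(3)] by simp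
      qed
    next
      case False
      show ?thesis
      proof (cases "x' \<in> D")
        case True
        then show ?thesis using mixed[OF True False xx(3)[symmetric]] by simp
      next
        case False2: False
        have "x = p x" by (rule pout[OF False, symmetric])
        also have "\<dots> = p x'" by (rule xx(3))
        also have "\<dots> = x'" by (rule pout[OF False2])
        finally show ?thesis .
      qed
    qed
  qed
  have pimg: "p ` {..<n} \<subseteq> {..<n}"
  proof
    fix z assume "z \<in> p ` {..<n}"
    then obtain x where x: "x < n" "z = p x" by auto
    show "z \<in> {..<n}"
    proof (cases "x \<in> D")
      case True then show ?thesis using pinD Dn x by auto
    next
      case False then show ?thesis using pout x by auto
    qed
  qed
  have pp: "p permutes {..<n}"
  proof (rule bij_imp_permutes)
    have "p ` {..<n} = {..<n}" by (rule endo_inj_surj) (use pimg injp in auto)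
    then show "bij_betw p {..<n} {..<n}" using injp by (simp add: bij_betw_def)
    show "\<And>x. x \<notin> {..<n} \<Longrightarrow> p x = x" using Dn pout by auto
  qed
  have p0: "p 0 = i" by (simp add: p_def)
  have ZD: "z \<in> Z \<Longrightarrow> z \<notin> D" for z using Dn by (auto simp: Z_def)
  have pZ: "p ` Z = Z"
  proof -
    have "p ` Z = (\<lambda>z. z) ` Z" by (rule image_cong[OF refl]) (use pout ZD in auto)
    then show ?thesis by simp
  qed
  have all: "\<forall>r\<in>R. B r (p r) \<noteq> 0 \<and> smag (B r (p r)) = bnd p r"
  proof
    fix r assume r: "r \<in> R"
    then have r1: "1 \<le> r" "r < n" by (auto simp: R_def)
    show "B r (p r) \<noteq> 0 \<and> smag (B r (p r)) = bnd p r"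
    proof (cases "r \<in> D")
      case True
      then obtain k where k: "k \<le> m" "r = sq k" by (auto simp: D_def)
      have km: "k < m" using k sm r1 by (cases "k = m") auto
      have rC: "r \<in> C" using k km by (auto simp: C_def)
      have pr: "p r = f r" using rC r1 by (simp add: p_def)
      have vr: "v r \<noteq> 0" using Dn True by simp
      have fp: "f r < n" "f r \<noteq> r" "A r (f r) * v (f r) = A 0 0 * v r"
        using fprop[of r] r1 vr by auto
      have tf: "A r (f r) \<noteq> 0" "smag (A r (f r)) + w (f r) = g + w r"
        using tight_facts[OF r1(2) fp(1) _ fp(3) vr] fp(2) by auto
      have Bf: "B r (f r) = - A r (f r)" using B_off fp(2) by simp
      have rZ: "r \<notin> Z" using vr by (simp add: Z_def)
      show ?thesis using pr Bf tf rZ by (simp add: minus_eq0 smag_minus bnd_def eq_diff_eq)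
    next
      case False
      then have "p r = r" using pout by simp
      then show ?thesis using B_diag[OF r1] by (simp add: bnd_def sz)
    qed
  qed
  show ?thesis using good_perm[OF i pp p0 pZ all] pp p0 by blast
qed

end

context ctx begin

lemma skip0: "skip 0 r = Suc r" by (simp add: skip_def)

lemma adj_signed:
  assumes i: "i < n"
  shows "signed (sadj n B i 0)"
proof -
  define T where "T s = psign s * (\<Prod>r<n-1. B (Suc r) (skip i (s r)))" for s :: "nat \<Rightarrow> nat"
  define PS where "PS = {s. s permutes {..<n-1}}"
  have finPS: "finite PS" unfolding PS_def by (rule finite_permutations) simp
  have adj: "sadj n B i 0 = (-1)^i * (\<Sum>s\<in>PS. T s)"
    by (simp add: sadj_def sdet_def sminor_def skip0 T_def PS_def)
  have TP: "T s = psign s * P (Phi n i s)" for s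
    unfolding T_def P_def R_def using Phi_prod[OF n1, of B i s] by simp
  have Tprops: "signed (T s) \<and> sg (T s) = sign s * sg (P (Phi n i s)) \<and> (T s = 0 \<longleftrightarrow> P (Phi n i s) = 0)
     \<and> (T s \<noteq> 0 \<longrightarrow> smag (T s) = smag (P (Phi n i s)))" if s: "s \<in> PS" for s
  proof -
    have pp: "Phi n i s permutes {..<n}" using Phi_props[OF i] s by (simp add: PS_def)
    have "signed (P (Phi n i s))" using P_props[OF pp] by simp
    then show ?thesis unfolding TP using psign_props[of s]
      by (auto simp: signed_mult sg_mult mult_eq0 smag_mult)
  qed
  show ?thesis
  proof (cases "v i = 0")
    case True
    have "\<forall>s\<in>PS. T s = 0"
    proof
      fix s assume s: "s \<in> PS"
      have "Phi n i s permutes {..<n} \<and> Phi n i s 0 = i" using Phi_props[OF i] s by (simp add: PS_def)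
      then have "P (Phi n i s) = 0" using core_c[OF i True] by blast
      then show "T s = 0" using Tprops[OF s] by simp
    qed
    then have "(\<Sum>s\<in>PS. T s) = 0" by simp
    then show ?thesis unfolding adj using pow_props[of i] by (simp add: signed_mult)
  next
    case False
    define s0 where "s0 = (-1)^i * sg (v i) * sg (v 0)"
    have s0sq: "s0 * s0 = 1"
    proof -
      have "s0 * s0 = ((-1)^i * (-1)^i) * (sg (v i) * sg (v i)) * (sg (v 0) * sg (v 0))"
        by (simp add: s0_def algebra_simps)
      then show ?thesis using neg1_sq sg_pm[OF i False] sg_pm[of 0] v0_nz n1 by simp
    qed
    then have s0pm: "s0 = 1 \<or> s0 = -1" by (rule pos_zmult_eq_1_iff_lemma)
    define X where "X = (if s0 = 1 then SPos (K i) else SNeg (K i))"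
    have Xs: "signed X" "X \<noteq> 0" "sg X = s0" "smag X = K i"
      using s0pm by (auto simp: X_def signed_def sz)
    have top: "T s = X" if s: "s \<in> PS" "T s \<noteq> 0" "smag (T s) = K i" for s
    proof -
      have ph: "Phi n i s permutes {..<n}" "Phi n i s 0 = i" "sign (Phi n i s) = (-1)^i * sign s"
        using Phi_props[OF i] s by (auto simp: PS_def)
      have Pnz: "P (Phi n i s) \<noteq> 0" using Tprops[OF s(1)] s(2) by simp
      have sm: "(\<Sum>r\<in>R. smag (B r (Phi n i s r))) = K i"
        using Tprops[OF s(1)] s P_props[OF ph(1)] Pnz by simp
      have "sign (Phi n i s) * (\<Prod>r\<in>R. sg (B r (Phi n i s r))) = sg (v i) * sg (v 0)"
        using core_a[OF i False ph(1) ph(2) Pnz] sm by simp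
      then have e: "(-1)^i * sign s * sg (P (Phi n i s)) = sg (v i) * sg (v 0)"
        using ph(3) P_props[OF ph(1)] by simp
      have "sg (T s) = ((-1)^i * (-1)^i) * sign s * sg (P (Phi n i s))"
        using Tprops[OF s(1)] neg1_sq by simp
      also have "\<dots> = (-1)^i * ((-1)^i * sign s * sg (P (Phi n i s)))" by (simp add: algebra_simps)
      also have "\<dots> = s0" using e by (simp add: s0_def algebra_simps)
      finally have "sg (T s) = sg X" using Xs by simp
      moreover have "smag (T s) = smag X" using s Xs by simp
      ultimately show ?thesis using signed_eq Tprops[OF s(1)] Xs by blast
    qed
    have le: "\<forall>s\<in>PS. sle (T s) X"
    proof
      fix s assume s: "s \<in> PS"
      show "sle (T s) X"
      proof (cases "T s = 0")
        case True then show ?thesis using sle_char[of "T s" X] Xs Tprops[OF s] by simp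
      next
        case Tn: False
        have ph: "Phi n i s permutes {..<n}" "Phi n i s 0 = i"
          using Phi_props[OF i] s by (auto simp: PS_def)
        have Pnz: "P (Phi n i s) \<noteq> 0" using Tprops[OF s] Tn by simp
        have "smag (T s) \<le> K i"
          using core_a[OF i False ph(1) ph(2) Pnz] Tprops[OF s] Tn P_props[OF ph(1)] Pnz by simp
        then have "smag (T s) < smag X \<or> T s = X" using top[OF s Tn] Xs by (auto simp: order_le_less)
        then show ?thesis using sle_char[of "T s" X] Xs Tprops[OF s] by auto
      qed
    qed
    obtain p where p: "p permutes {..<n}" "p 0 = i" "P p \<noteq> 0" "(\<Sum>r\<in>R. smag (B r (p r))) = K i"
      using core_b[OF i False] by blast
    obtain s where s: "s permutes {..<n-1}" "Phi n i s = p" using Phi_surj[OF i p(1) p(2)] by blast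
    have sPS: "s \<in> PS" using s by (simp add: PS_def)
    have Tnz: "T s \<noteq> 0" using Tprops[OF sPS] s p by simp
    have "smag (T s) = K i" using Tprops[OF sPS] Tnz s p P_props[OF p(1)] by simp
    then have "T s = X" using top[OF sPS Tnz] by simp
    then have "(\<Sum>s\<in>PS. T s) = X" using sum_eq_top[OF finPS le sPS] by simp
    moreover have "signed ((-1)^i * X)"
      by (rule signed_mult[OF conjunct1[OF pow_props[of i]] Xs(1)])
    ultimately show ?thesis unfolding adj by simp
  qed
qed

end

theorem corollary5p20:
  fixes A :: "'a::linordered_ab_group_add smat" and n :: nat
  assumes div: "divisible_group TYPE('a)"
    and n: "n \<ge> 1"
    and tpd: "TPD n A"
    and sorted: "\<forall>i j. i \<le> j \<and> j < n \<longrightarrow> sle (A j j) (A i i)"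
    and simple: "n \<ge> 2 \<longrightarrow> sgt (A 0 0) (A 1 1)"
    and notsigned: "\<not> (\<forall>i<n. signed (sadj n (\<lambda>i j. A 0 0 * sident i j \<ominus> A i j) i 0))"
  shows "\<not> (\<exists>v. strong_eigenvector n A (A 0 0) v)"
proof
  assume "\<exists>v. strong_eigenvector n A (A 0 0) v"
  then obtain v where ev: "strong_eigenvector n A (A 0 0) v" by blast
  interpret ctx A n v using n tpd sorted simple ev by unfold_locales
  have "\<forall>i<n. signed (sadj n (\<lambda>i j. A 0 0 * sident i j \<ominus> A i j) i 0)"
    using adj_signed unfolding B_def by blast
  with notsigned show False by simp
qed

end
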